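(* Let $G=(V,E)$ be a diamond-free graph and $xy\in E$. For $i\ge 1$ let $N_i=\{z\in V:\ \min(\mathrm{dist}_G(z,x),\mathrm{dist}_G(z,y))=i\}$, and suppose $N_2=\{u_1,\dots,u_k\}$ is an independent set. For $j\in\{1,\dots,k\}$ let $T_j=\{t\in N_3:\ N(t)\cap N_2=\{u_j\}\}$. Let $Y=V\setminus(\{x,y\}\cup N_1\cup N_2\cup N_3)$. Let $z\in N_4$ have no neighbor in $Y$, and suppose $z$ is adjacent to some $t_i\in T_i$. Then every dominating induced matching $M$ of $G$ with $xy\in M$ contains the edge $u_it_i$. Moreover, if $|N(z)\cap T_i|\ge 2$, then $G$ has no dominating induced matching $M$ with $xy\in M$.
   Context: All graphs are finite, simple and undirected; $\mathrm{dist}_G$ is the shortest-path distance and $N(v)$ the set of neighbors of $v$. A set $M$ of edges is a dominating induced matching if every edge of $G$ shares at least one vertex with exactly one edge of $M$. A diamond is $K_4$ minus one edge. *)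

theory Defs
  imports Main "HOL-Library.Extended_Nat"
begin

definition graph :: "'a set \<Rightarrow> ('a \<Rightarrow> 'a \<Rightarrow> bool) \<Rightarrow> bool" where
  "graph V E \<longleftrightarrow> finite V \<and>
     (\<forall>u v. E u v \<longrightarrow> u \<in> V \<and> v \<in> V \<and> u \<noteq> v \<and> E v u)"

definition nbhd :: "'a set \<Rightarrow> ('a \<Rightarrow> 'a \<Rightarrow> bool) \<Rightarrow> 'a \<Rightarrow> 'a set" where
  "nbhd V E v = {w \<in> V. E v w}"

definition edges :: "('a \<Rightarrow> 'a \<Rightarrow> bool) \<Rightarrow> 'a set set" where
  "edges E = {{u, v} | u v. E u v}"

definition walk_len :: "'a set \<Rightarrow> ('a \<Rightarrow> 'a \<Rightarrow> bool) \<Rightarrow> nat \<Rightarrow> 'a \<Rightarrow> 'a \<Rightarrow> bool" where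
  "walk_len V E n u v \<longleftrightarrow> (\<exists>p :: nat \<Rightarrow> 'a. p 0 = u \<and> p n = v \<and>
      (\<forall>i\<le>n. p i \<in> V) \<and> (\<forall>i<n. E (p i) (p (Suc i))))"

(* shortest-path distance; infinity if no path *)
definition gdist :: "'a set \<Rightarrow> ('a \<Rightarrow> 'a \<Rightarrow> bool) \<Rightarrow> 'a \<Rightarrow> 'a \<Rightarrow> enat" where
  "gdist V E u v = (INF n \<in> {n. walk_len V E n u v}. enat n)"

(* diamond = K4 minus one edge; diamond-free = no induced diamond *)
definition diamond_free :: "'a set \<Rightarrow> ('a \<Rightarrow> 'a \<Rightarrow> bool) \<Rightarrow> bool" where
  "diamond_free V E \<longleftrightarrow> \<not> (\<exists>a\<in>V. \<exists>b\<in>V. \<exists>c\<in>V. \<exists>d\<in>V.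
      distinct [a, b, c, d] \<and> E a b \<and> E a c \<and> E a d \<and> E b c \<and> E b d \<and> \<not> E c d)"

definition independent :: "('a \<Rightarrow> 'a \<Rightarrow> bool) \<Rightarrow> 'a set \<Rightarrow> bool" where
  "independent E S \<longleftrightarrow> (\<forall>u\<in>S. \<forall>v\<in>S. \<not> E u v)"

definition dim :: "('a \<Rightarrow> 'a \<Rightarrow> bool) \<Rightarrow> 'a set set \<Rightarrow> bool" where
  "dim E M \<longleftrightarrow> M \<subseteq> edges E \<and>
     (\<forall>e\<in>edges E. card {m \<in> M. m \<inter> e \<noteq> {}} = 1)"

definition layer :: "'a set \<Rightarrow> ('a \<Rightarrow> 'a \<Rightarrow> bool) \<Rightarrow> 'a \<Rightarrow> 'a \<Rightarrow> nat \<Rightarrow> 'a set" where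
  "layer V E x y i = {z \<in> V. min (gdist V E z x) (gdist V E z y) = enat i}"

end

theory Submission
  imports Defs
begin

lemma walk_gdist: "walk_len V E n u v \<Longrightarrow> gdist V E u v \<le> enat n"
  unfolding gdist_def by (rule INF_lower) simp

lemma gdist_attain: assumes "gdist V E u v = enat n" shows "walk_len V E n u v"
proof -
  let ?S = "{n. walk_len V E n u v}"
  have ne: "?S \<noteq> {}"
  proof
    assume "?S = {}"
    then have "gdist V E u v = top" unfolding gdist_def by simp
    with assms show False by (simp add: top_enat_def)
  qed
  define m where "m = (LEAST n. walk_len V E n u v)"
  have wm: "walk_len V E m u v" using ne unfolding m_def by (metis Collect_empty_eq LeastI)
  have "gdist V E u v = enat m"
  proof (rule antisym)
    show "gdist V E u v \<le> enat m" using wm by (rule walk_gdist)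
    show "enat m \<le> gdist V E u v" unfolding gdist_def
      by (rule INF_greatest) (simp add: m_def Least_le)
  qed
  with assms wm show ?thesis by simp
qed

lemma gdist_step:
  assumes g: "graph V E" and e: "E a b"
  shows "gdist V E a v \<le> eSuc (gdist V E b v)"
proof (cases "gdist V E b v")
  case (enat n)
  then obtain p where p: "p 0 = b" "p n = v" "\<forall>i\<le>n. p i \<in> V" "\<forall>i<n. E (p i) (p (Suc i))"
    using gdist_attain unfolding walk_len_def by metis
  have aV: "a \<in> V" using g e unfolding graph_def by blast
  define q where "q i = (if i = 0 then a else p (i - 1))" for i
  have "walk_len V E (Suc n) a v" unfolding walk_len_def
  proof (intro exI[of _ q] conjI allI impI)
    show "q 0 = a" by (simp add: q_def)
    show "q (Suc n) = v" using p by (simp add: q_def)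
    fix i assume "i \<le> Suc n" then show "q i \<in> V" using p aV by (auto simp: q_def)
  next
    fix i assume i: "i < Suc n"
    show "E (q i) (q (Suc i))"
    proof (cases i)
      case 0 then show ?thesis using e p by (simp add: q_def)
    next
      case (Suc j) then show ?thesis using p i by (simp add: q_def)
    qed
  qed
  then have "gdist V E a v \<le> enat (Suc n)" by (rule walk_gdist)
  then show ?thesis using enat by (simp add: eSuc_enat)
qed simp

lemma gdist_self: "v \<in> V \<Longrightarrow> gdist V E v v = 0"
proof -
  assume "v \<in> V"
  then have "walk_len V E 0 v v" unfolding walk_len_def by (intro exI[of _ "\<lambda>_. v"]) simp
  then have "gdist V E v v \<le> enat 0" by (rule walk_gdist)
  then show ?thesis by (metis le_zero_eq zero_enat_def)
qed

lemma gdist_zero: "gdist V E u v = 0 \<Longrightarrow> u = v"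
  using gdist_attain[of V E u v 0] unfolding walk_len_def zero_enat_def by auto

lemma walk_split: "walk_len V E (Suc n) u v \<Longrightarrow> \<exists>w. E u w \<and> walk_len V E n w v"
proof -
  assume "walk_len V E (Suc n) u v"
  then obtain p where p: "p 0 = u" "p (Suc n) = v" "\<forall>i\<le>Suc n. p i \<in> V" "\<forall>i<Suc n. E (p i) (p (Suc i))"
    unfolding walk_len_def by blast
  have "walk_len V E n (p 1) v" unfolding walk_len_def
    by (intro exI[of _ "\<lambda>i. p (Suc i)"]) (use p in auto)
  moreover have "E u (p 1)" using p by auto
  ultimately show ?thesis by blast
qed

definition md where "md V E x y v = min (gdist V E v x) (gdist V E v y)"

lemma min_aux: "(a::enat) \<le> eSuc c \<Longrightarrow> b \<le> eSuc d \<Longrightarrow> min a b \<le> eSuc (min c d)"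
proof (cases "c \<le> d")
  case True
  assume "a \<le> eSuc c"
  then show ?thesis using True by (simp add: min_absorb1 min.coboundedI1)
next
  case False
  assume "b \<le> eSuc d"
  then show ?thesis using False by (simp add: min_absorb2 min.coboundedI2)
qed

lemma md_step: assumes "graph V E" "E a b" shows "md V E x y a \<le> eSuc (md V E x y b)"
  unfolding md_def by (rule min_aux[OF gdist_step[OF assms] gdist_step[OF assms]])

lemma md_pred:
  assumes g: "graph V E" and m: "md V E x y u = enat (Suc n)"
  shows "\<exists>w. E u w \<and> md V E x y w = enat n"
proof -
  have "\<exists>c. gdist V E u c = enat (Suc n) \<and> (c = x \<or> c = y)"
  proof (cases "gdist V E u x \<le> gdist V E u y")
    case True
    then have "gdist V E u x = enat (Suc n)" using m unfolding md_def by (simp add: min_absorb1)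
    then show ?thesis by blast
  next
    case False
    then have "gdist V E u y = enat (Suc n)" using m unfolding md_def by (simp add: min_absorb2)
    then show ?thesis by blast
  qed
  then obtain c where c: "gdist V E u c = enat (Suc n)" "c = x \<or> c = y" by blast
  obtain w where w: "E u w" "walk_len V E n w c" using walk_split[OF gdist_attain[OF c(1)]] by blast
  have "gdist V E w c \<le> enat n" using w(2) by (rule walk_gdist)
  then have le: "md V E x y w \<le> enat n" using c(2) unfolding md_def
    using min.coboundedI1 min.coboundedI2 by metis
  have "md V E x y u \<le> eSuc (md V E x y w)" by (rule md_step[OF g w(1)])
  then have "eSuc (enat n) \<le> eSuc (md V E x y w)" using m by (simp only: eSuc_enat)
  then have "enat n \<le> md V E x y w" by (simp only: eSuc_ile_mono)
  with le w(1) show ?thesis by auto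
qed

lemma layer_md: "v \<in> layer V E x y i \<longleftrightarrow> v \<in> V \<and> md V E x y v = enat i"
  unfolding layer_def md_def by auto

lemma md_N1:
  assumes g: "graph V E" and xy: "E x y" and m: "md V E x y w = enat 1" and wV: "w \<in> V"
  shows "(E w x \<or> E w y) \<and> w \<noteq> x \<and> w \<noteq> y"
proof -
  obtain v where v: "E w v" "md V E x y v = enat 0" using md_pred[OF g, of x y w 0] m by auto
  then have "gdist V E v x = 0 \<or> gdist V E v y = 0" unfolding md_def zero_enat_def
    by (cases "gdist V E v x \<le> gdist V E v y") (auto simp: min_def)
  then have "v = x \<or> v = y" using gdist_zero by metis
  moreover have "x \<in> V" "y \<in> V" using g xy unfolding graph_def by blast+
  then have mx: "md V E x y x = 0" "md V E x y y = 0" unfolding md_def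
    by (simp_all add: gdist_self)
  ultimately have a: "E w x \<or> E w y" using v(1) by blast
  have n1: "enat 1 \<noteq> 0" by (simp add: zero_enat_def)
  have "w \<noteq> x" using m mx(1) n1 by metis
  moreover have "w \<noteq> y" using m mx(2) n1 by metis
  ultimately show ?thesis using a by blast
qed

lemma dim_unique:
  assumes d: "dim E M" and e: "e \<in> edges E" and m1: "m1 \<in> M" "m1 \<inter> e \<noteq> {}"
    and m2: "m2 \<in> M" "m2 \<inter> e \<noteq> {}"
  shows "m1 = m2"
proof -
  have "card {m \<in> M. m \<inter> e \<noteq> {}} = 1" using d e unfolding dim_def by blast
  then obtain a where A: "{m \<in> M. m \<inter> e \<noteq> {}} = {a}" by (rule card_1_singletonE)
  have "m1 \<in> {m \<in> M. m \<inter> e \<noteq> {}}" "m2 \<in> {m \<in> M. m \<inter> e \<noteq> {}}" using m1 m2 by simp_all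
  then show ?thesis unfolding A by simp
qed

lemma dim_exists:
  assumes d: "dim E M" and e: "e \<in> edges E"
  shows "\<exists>m\<in>M. m \<inter> e \<noteq> {}"
proof -
  have "card {m \<in> M. m \<inter> e \<noteq> {}} = 1" using d e unfolding dim_def by blast
  then obtain a where A: "{m \<in> M. m \<inter> e \<noteq> {}} = {a}" by (rule card_1_singletonE)
  have "a \<in> {m \<in> M. m \<inter> e \<noteq> {}}" unfolding A by simp
  then show ?thesis by blast
qed

lemma edgeI: "E a b \<Longrightarrow> {a, b} \<in> edges E"
  unfolding edges_def by blast

lemma dim_edge:
  assumes g: "graph V E" and d: "dim E M" and m: "m \<in> M" and a: "a \<in> m"
  shows "\<exists>b. E a b \<and> m = {a, b}"
proof -
  have "m \<in> edges E" using d m unfolding dim_def by blast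
  then obtain p q where pq: "m = {p, q}" "E p q" unfolding edges_def by blast
  have sym: "E q p" using g pq(2) unfolding graph_def by blast
  have "a = p \<or> a = q" using a pq(1) by blast
  then show ?thesis
  proof
    assume "a = p" then show ?thesis using pq by blast
  next
    assume "a = q" then show ?thesis using pq sym by (metis insert_commute)
  qed
qed

lemma white:
  assumes g: "graph V E" and xy: "E x y" and d: "dim E M" and xyM: "{x, y} \<in> M"
    and w: "md V E x y w = enat 1" "w \<in> V"
  shows "\<forall>m\<in>M. w \<notin> m"
proof (intro ballI notI)
  fix m assume m: "m \<in> M" "w \<in> m"
  have N: "(E w x \<or> E w y) \<and> w \<noteq> x \<and> w \<noteq> y" using md_N1[OF g xy w] .
  then obtain c where c: "E w c" "c = x \<or> c = y" by blast
  have h1: "m \<inter> {w, c} \<noteq> {}" using m(2) by blast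
  have h2: "{x, y} \<inter> {w, c} \<noteq> {}" using c(2) by blast
  have "m = {x, y}" by (rule dim_unique[OF d edgeI[where E=E, OF c(1)] m(1) h1 xyM h2])
  then have "w \<in> {x, y}" using m(2) by simp
  with N show False by simp
qed

lemma N2_matched:
  assumes g: "graph V E" and xy: "E x y" and d: "dim E M" and xyM: "{x, y} \<in> M"
    and u: "md V E x y u = enat 2"
  shows "\<exists>m\<in>M. u \<in> m"
proof -
  have e2: "enat 2 = enat (Suc 1)" by simp
  obtain w where w: "E u w" "md V E x y w = enat 1" using md_pred[OF g u[unfolded e2]] by blast
  have wV: "w \<in> V" using g w(1) unfolding graph_def by blast
  obtain m where m: "m \<in> M" "m \<inter> {u, w} \<noteq> {}" using dim_exists[OF d edgeI[where E=E, OF w(1)]] by blast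
  have "w \<notin> m" using white[OF g xy d xyM w(2) wV] m(1) by blast
  with m show ?thesis by blast
qed

lemma main:
  assumes g: "graph V E" and xy: "E x y" and d: "dim E M" and xyM: "{x, y} \<in> M"
    and u: "u \<in> layer V E x y 2"
    and t: "t \<in> layer V E x y 3"
    and tu: "nbhd V E t \<inter> layer V E x y 2 = {u}"
    and z: "z \<in> layer V E x y 4"
    and zn: "nbhd V E z \<inter> (V - ({x, y} \<union> layer V E x y 1 \<union> layer V E x y 2 \<union> layer V E x y 3)) = {}"
    and zt: "E z t"
  shows "{u, t} \<in> M"
proof -
  have zmd: "md V E x y z = enat 4" using z layer_md by metis
  have zfree: "\<forall>m\<in>M. z \<notin> m"
  proof (intro ballI notI)
    fix m assume m: "m \<in> M" "z \<in> m"
    obtain s where s: "E z s" "m = {z, s}" using dim_edge[OF g d m(1) m(2)] by blast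
    have sV: "s \<in> V" using g s(1) unfolding graph_def by blast
    have st: "md V E x y z \<le> eSuc (md V E x y s)" by (rule md_step[OF g s(1)])
    have mem: "s \<in> {x, y} \<union> layer V E x y 1 \<union> layer V E x y 2 \<union> layer V E x y 3"
      using zn sV s(1) unfolding nbhd_def by blast
    have xyV: "x \<in> V" "y \<in> V" using g xy unfolding graph_def by blast+
    have "md V E x y x = enat 0" "md V E x y y = enat 0" unfolding md_def
      by (simp_all add: gdist_self[OF xyV(1)] gdist_self[OF xyV(2)] zero_enat_def[symmetric])
    moreover have "s = x \<or> s = y \<or> md V E x y s = enat 1 \<or> md V E x y s = enat 2 \<or> md V E x y s = enat 3"
      using mem[unfolded layer_md Un_iff insert_iff empty_iff] by blast
    ultimately have cs: "md V E x y s = enat 0 \<or> md V E x y s = enat 1 \<or> md V E x y s = enat 2 \<or> md V E x y s = enat 3"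
      by blast
    have bad: "md V E x y s \<noteq> enat k" if "k < 3" for k
    proof
      assume "md V E x y s = enat k"
      then have "enat 4 \<le> enat (Suc k)" using st zmd by (simp add: eSuc_enat)
      with that show False by simp
    qed
    have e3: "enat 3 = enat (Suc 2)" by simp
    have s3: "md V E x y s = enat 3" using cs bad[of 0] bad[of 1] bad[of 2] by simp
    obtain w where w: "E s w" "md V E x y w = enat 2"
      using md_pred[OF g s3[unfolded e3]] by blast
    obtain m' where m': "m' \<in> M" "w \<in> m'" using N2_matched[OF g xy d xyM w(2)] by blast
    have "m = m'" using dim_unique[OF d edgeI[where E=E, OF w(1)] m(1) _ m'(1)] s(2) m'(2) by blast
    then have "w \<in> {z, s}" using m' s by blast
    moreover have "w \<noteq> s" using g w(1) unfolding graph_def by blast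
    moreover have "w \<noteq> z" using w(2) zmd by auto
    ultimately show False by blast
  qed
  obtain m where m: "m \<in> M" "m \<inter> {z, t} \<noteq> {}" using dim_exists[OF d edgeI[where E=E, OF zt]] by blast
  have tm: "t \<in> m" using m zfree by blast
  have ut: "E t u" using tu unfolding nbhd_def by blast
  have "md V E x y u = enat 2" using u layer_md by metis
  then obtain m' where m': "m' \<in> M" "u \<in> m'" using N2_matched[OF g xy d xyM] by blast
  have "m = m'" using dim_unique[OF d edgeI[where E=E, OF ut] m(1) _ m'(1)] tm m'(2) by blast
  then have um: "u \<in> m" using m' by simp
  obtain b where b: "E t b" "m = {t, b}" using dim_edge[OF g d m(1) tm] by blast
  have "u \<noteq> t" using g ut unfolding graph_def by blast
  then have "u = b" using um b(2) by simp
  moreover have "{t, b} = {b, t}" by (rule insert_commute)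
  ultimately have "m = {u, t}" using b(2) by (simp only:)
  with m(1) show ?thesis by (simp only:)
qed

theorem proposition1:
  fixes V :: "'a set" and E :: "'a \<Rightarrow> 'a \<Rightarrow> bool" and x y z u t :: 'a
  assumes "graph V E"
    and "diamond_free V E"
    and "E x y"
    and "independent E (layer V E x y 2)"
    and "u \<in> layer V E x y 2"
    and "t \<in> layer V E x y 3"
    and "nbhd V E t \<inter> layer V E x y 2 = {u}"
    and "z \<in> layer V E x y 4"
    and "nbhd V E z \<inter> (V - ({x, y} \<union> layer V E x y 1 \<union> layer V E x y 2 \<union> layer V E x y 3)) = {}"
    and "E z t"
  shows "(\<forall>M. dim E M \<and> {x, y} \<in> M \<longrightarrow> {u, t} \<in> M)
       \<and> (card (nbhd V E z \<inter> {t' \<in> layer V E x y 3. nbhd V E t' \<inter> layer V E x y 2 = {u}}) \<ge> 2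
            \<longrightarrow> \<not> (\<exists>M. dim E M \<and> {x, y} \<in> M))"
proof (intro conjI allI impI notI)
  fix M assume "dim E M \<and> {x, y} \<in> M"
  then have M: "dim E M" "{x, y} \<in> M" by simp_all
  show "{u, t} \<in> M" by (rule main[OF assms(1,3) M assms(5-10)])
next
  let ?S = "nbhd V E z \<inter> {t' \<in> layer V E x y 3. nbhd V E t' \<inter> layer V E x y 2 = {u}}"
  assume c: "2 \<le> card ?S" and "\<exists>M. dim E M \<and> {x, y} \<in> M"
  then obtain M where M: "dim E M" "{x, y} \<in> M" by blast
  have "?S \<noteq> {}" using c by auto
  then obtain t1 where t1: "t1 \<in> ?S" by blast
  have "\<exists>t2\<in>?S. t2 \<noteq> t1"
  proof (rule ccontr)
    assume "\<not> ?thesis"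
    then have "?S \<subseteq> {t1}" by blast
    then have "card ?S \<le> 1" using card_mono[of "{t1}" ?S] by simp
    with c show False by simp
  qed
  then obtain t2 where t2: "t2 \<in> ?S" "t2 \<noteq> t1" by blast
  have t1a: "t1 \<in> layer V E x y 3" "nbhd V E t1 \<inter> layer V E x y 2 = {u}" "E z t1"
    using t1 unfolding nbhd_def by simp_all
  have M1: "{u, t1} \<in> M" by (rule main[OF assms(1,3) M assms(5) t1a(1,2) assms(8,9) t1a(3)])
  have t2a: "t2 \<in> layer V E x y 3" "nbhd V E t2 \<inter> layer V E x y 2 = {u}" "E z t2"
    using t2 unfolding nbhd_def by simp_all
  have M2: "{u, t2} \<in> M" by (rule main[OF assms(1,3) M assms(5) t2a(1,2) assms(8,9) t2a(3)])
  have e1: "E t1 u" using t1 unfolding nbhd_def by blast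
  have h1: "{u, t1} \<inter> {t1, u} \<noteq> {}" by simp
  have h2: "{u, t2} \<inter> {t1, u} \<noteq> {}" by simp
  have eq: "{u, t1} = {u, t2}" by (rule dim_unique[OF M(1) edgeI[where E=E, OF e1] M1 h1 M2 h2])
  have "t1 \<in> {u, t1}" by simp
  then have "t1 \<in> {u, t2}" unfolding eq .
  moreover have "t1 \<noteq> u" using e1 assms(1) unfolding graph_def by blast
  ultimately show False using t2(2) by simp
qed

end
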